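(* Let $r\ge 2$ be an integer. For $n>r$ let $f_r(n)=\max\{q_{\min}(G): G \text{ is a graph of order } n \text{ containing no } K_{r+1}\}$, and let $c_r=\sup\{q_{\min}(G)/v(G): G \text{ is a graph with no } K_{r+1}\}$. Then the limit $\lim_{n\to\infty} f_r(n)/n$ exists and equals $c_r$.
   Context: All graphs are finite and simple with at least one vertex; $v(G)$ is the number of vertices of $G$; $K_{r+1}$ is the complete graph on $r+1$ vertices and "containing no $K_{r+1}$" means having no subgraph isomorphic to $K_{r+1}$. For a graph $G$ with adjacency matrix $A$ and diagonal degree matrix $D$, the signless Laplacian is $Q(G)=D+A$, and $q_{\min}(G)$ denotes its smallest eigenvalue. *)

theory Defs
  imports Complex_Main "Jordan_Normal_Form.Char_Poly"
begin

definition simple_graph_on :: "nat \<Rightarrow> (nat \<Rightarrow> nat \<Rightarrow> bool) \<Rightarrow> bool" where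
  "simple_graph_on n E \<longleftrightarrow>
     (\<forall>i j. E i j \<longrightarrow> i < n \<and> j < n) \<and> (\<forall>i j. E i j \<longrightarrow> E j i) \<and> (\<forall>i. \<not> E i i)"

definition contains_clique :: "nat \<Rightarrow> (nat \<Rightarrow> nat \<Rightarrow> bool) \<Rightarrow> nat \<Rightarrow> bool" where
  "contains_clique n E k \<longleftrightarrow>
     (\<exists>S. S \<subseteq> {..<n} \<and> card S = k \<and> (\<forall>i\<in>S. \<forall>j\<in>S. i \<noteq> j \<longrightarrow> E i j))"

definition degree :: "nat \<Rightarrow> (nat \<Rightarrow> nat \<Rightarrow> bool) \<Rightarrow> nat \<Rightarrow> nat" where
  "degree n E i = card {k. k < n \<and> E i k}"

definition signless_laplacian :: "nat \<Rightarrow> (nat \<Rightarrow> nat \<Rightarrow> bool) \<Rightarrow> real mat" where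
  "signless_laplacian n E =
     mat n n (\<lambda>(i, j). (if i = j then real (degree n E i) else 0) + (if E i j then 1 else 0))"

definition q_min :: "nat \<Rightarrow> (nat \<Rightarrow> nat \<Rightarrow> bool) \<Rightarrow> real" where
  "q_min n E = Min {a. eigenvalue (signless_laplacian n E) a}"

definition f_r :: "nat \<Rightarrow> nat \<Rightarrow> real" where
  "f_r r n = Max {q_min n E | E. simple_graph_on n E \<and> \<not> contains_clique n E (r + 1)}"

definition c_r :: "nat \<Rightarrow> real" where
  "c_r r = Sup {q_min n E / real n | n E. n \<ge> 1 \<and> simple_graph_on n E \<and> \<not> contains_clique n E (r + 1)}"

end

theory Submission imports Defs "HOL-Analysis.Analysis" begin

definition Qf :: "nat \<Rightarrow> (nat \<Rightarrow> nat \<Rightarrow> bool) \<Rightarrow> (nat \<Rightarrow> real) \<Rightarrow> nat \<Rightarrow> real" where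
  "Qf n E x i = real (degree n E i) * x i + (\<Sum>j<n. if E i j then x j else 0)"

definition qf :: "nat \<Rightarrow> (nat \<Rightarrow> nat \<Rightarrow> bool) \<Rightarrow> (nat \<Rightarrow> real) \<Rightarrow> real" where
  "qf n E x = (\<Sum>i<n. \<Sum>j<n. if E i j then (x i + x j)^2 else 0)"

definition nrm :: "nat \<Rightarrow> (nat \<Rightarrow> real) \<Rightarrow> real" where
  "nrm n x = (\<Sum>i<n. (x i)^2)"

lemma degree_sum: "real (degree n E i) = (\<Sum>j<n. if E i j then 1 else 0)"
proof -
  have "{k. k < n \<and> E i k} = {k\<in>{..<n}. E i k}" by auto
  then have "real (degree n E i) = (\<Sum>j\<in>{k\<in>{..<n}. E i k}. 1)" by (simp add: degree_def)
  also have "\<dots> = (\<Sum>j<n. if E i j then 1 else 0)" by (rule sum.inter_filter) simp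
  finally show ?thesis .
qed

lemma form_eq:
  assumes G: "simple_graph_on n E"
  shows "(\<Sum>i<n. x i * Qf n E x i) = qf n E x / 2"
proof -
  have sym: "E i j = E j i" for i j using G unfolding simple_graph_on_def by blast
  have L: "(\<Sum>i<n. x i * Qf n E x i) = (\<Sum>i<n. \<Sum>j<n. if E i j then (x i)^2 + x i * x j else 0)"
    by (rule sum.cong, simp, simp add: Qf_def degree_sum sum_distrib_left sum_distrib_right
        sum.distrib[symmetric] power2_eq_square if_distrib cong: if_cong, intro sum.cong refl, auto simp: algebra_simps)
  have sw: "(\<Sum>i<n. \<Sum>j<n. if E i j then (x j)^2 else 0) = (\<Sum>i<n. \<Sum>j<n. if E i j then (x i)^2 else 0)"
    by (subst sum.swap) (simp add: sym)
  have "qf n E x = (\<Sum>i<n. \<Sum>j<n. (if E i j then (x i)^2 + x i * x j else 0) + (if E i j then (x j)^2 + x i * x j else 0))"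
    unfolding qf_def by (intro sum.cong refl) (auto simp: power2_eq_square algebra_simps)
  also have "\<dots> = (\<Sum>i<n. \<Sum>j<n. if E i j then (x i)^2 + x i * x j else 0)
      + (\<Sum>i<n. \<Sum>j<n. if E i j then (x j)^2 + x i * x j else 0)"
    by (simp add: sum.distrib)
  also have "(\<Sum>i<n. \<Sum>j<n. if E i j then (x j)^2 + x i * x j else 0)
      = (\<Sum>i<n. \<Sum>j<n. if E i j then (x j)^2 else 0) + (\<Sum>i<n. \<Sum>j<n. if E i j then x i * x j else 0)"
    by (simp add: sum.distrib[symmetric] if_distrib cong: if_cong)
  also have "\<dots> = (\<Sum>i<n. \<Sum>j<n. if E i j then (x i)^2 + x i * x j else 0)"
    by (simp add: sw sum.distrib[symmetric]) (intro sum.cong refl, auto)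
  finally show ?thesis using L by simp
qed

lemma mv_eq:
  assumes "v \<in> carrier_vec n" "i < n"
  shows "(signless_laplacian n E *\<^sub>v v) $ i = Qf n E (\<lambda>j. v $ j) i"
proof -
  have "(signless_laplacian n E *\<^sub>v v) $ i = (\<Sum>j<n. ((if i = j then real (degree n E i) else 0) + (if E i j then 1 else 0)) * v $ j)"
    using assms by (simp add: signless_laplacian_def scalar_prod_def lessThan_atLeast0)
  also have "\<dots> = (\<Sum>j<n. (if i = j then real (degree n E i) * v $ j else 0)) + (\<Sum>j<n. if E i j then v $ j else 0)"
    by (subst sum.distrib[symmetric]) (intro sum.cong refl, auto simp: algebra_simps)
  also have "\<dots> = Qf n E (\<lambda>j. v $ j) i" using assms by (simp add: Qf_def sum.delta)
  finally show ?thesis .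
qed

lemma Qf_cong: "(\<And>j. j < n \<Longrightarrow> x j = y j) \<Longrightarrow> i < n \<Longrightarrow> Qf n E x i = Qf n E y i"
  unfolding Qf_def by (auto intro!: sum.cong)

lemma qf_cong: "(\<And>j. j < n \<Longrightarrow> x j = y j) \<Longrightarrow> qf n E x = qf n E y"
  unfolding qf_def by (auto intro!: sum.cong)

lemma nrm_cong: "(\<And>j. j < n \<Longrightarrow> x j = y j) \<Longrightarrow> nrm n x = nrm n y"
  unfolding nrm_def by (auto intro!: sum.cong)

lemma qf_nonneg: "qf n E x \<ge> 0"
  unfolding qf_def by (intro sum_nonneg) auto

lemma nrm_nonneg: "nrm n x \<ge> 0"
  unfolding nrm_def by (intro sum_nonneg) auto

lemma qf_scale: "qf n E (\<lambda>i. c * x i) = c^2 * qf n E x"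
  unfolding qf_def by (simp add: sum_distrib_left power2_eq_square algebra_simps if_distrib cong: if_cong)

lemma nrm_scale: "nrm n (\<lambda>i. c * x i) = c^2 * nrm n x"
  unfolding nrm_def by (simp add: sum_distrib_left power2_eq_square algebra_simps)

lemma Qf_lin: "Qf n E (\<lambda>i. x i + t * y i) k = Qf n E x k + t * Qf n E y k"
  unfolding Qf_def by (simp add: algebra_simps sum.distrib[symmetric] sum_distrib_left if_distrib cong: if_cong)

lemma Qf_sym:
  assumes G: "simple_graph_on n E"
  shows "(\<Sum>i<n. x i * Qf n E y i) = (\<Sum>i<n. y i * Qf n E x i)"
proof -
  have sym: "E i j = E j i" for i j using G unfolding simple_graph_on_def by blast
  have e: "(\<Sum>i<n. x i * Qf n E y i) = (\<Sum>i<n. real (degree n E i) * x i * y i)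
     + (\<Sum>i<n. \<Sum>j<n. if E i j then x i * y j else 0)" for x y
    unfolding Qf_def by (simp add: algebra_simps sum.distrib sum_distrib_left if_distrib cong: if_cong)
  have "(\<Sum>i<n. \<Sum>j<n. if E i j then x i * y j else 0) = (\<Sum>i<n. \<Sum>j<n. if E i j then y i * x j else 0)"
    by (subst sum.swap) (intro sum.cong refl, auto simp: sym mult.commute)
  then show ?thesis by (simp add: e mult.commute mult.left_commute)
qed

lemma quad_zero:
  fixes b c :: real
  assumes "\<And>t. 0 \<le> 2 * t * b + t^2 * c"
  shows "b = 0"
proof -
  define s where "s = \<bar>c\<bar> + 1"
  have s: "s > 0" "c - 2 * s < 0" by (auto simp: s_def)
  have "0 \<le> 2 * (- b / s) * b + (- b / s)^2 * c" by (rule assms)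
  also have "\<dots> = b^2 * (c - 2 * s) / s^2"
    using s by (simp add: field_simps power2_eq_square)
  finally have "0 \<le> b^2 * (c - 2 * s)" using s by (simp add: zero_le_divide_iff)
  then have "b^2 \<le> 0" using s by (simp add: zero_le_mult_iff)
  then show ?thesis by simp
qed

lemma qf_cont: "continuous_on UNIV (\<lambda>x. qf n E x / 2)"
  unfolding qf_def
  apply (intro continuous_intros)
  subgoal for i j by (cases "E i j") (auto intro!: continuous_intros)
  by simp
lemma compact_cube:
  "compact (Pi\<^sub>E UNIV (\<lambda>i::nat. if i < n then {-1..1::real} else {0}))"
proof -
  have "compactin (product_topology (\<lambda>_. euclideanreal) UNIV) (Pi\<^sub>E UNIV (\<lambda>i::nat. if i < n then {-1..1::real} else {0}))"
    by (subst compactin_PiE) auto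
  then show ?thesis by (simp add: euclidean_product_topology)
qed

lemma sphere_min:
  fixes g :: "(nat \<Rightarrow> real) \<Rightarrow> real"
  assumes n: "n \<ge> 1" and g: "continuous_on UNIV g"
  shows "\<exists>x0. (\<forall>i\<ge>n. x0 i = 0) \<and> (\<Sum>i<n. (x0 i)^2) = 1 \<and>
     (\<forall>y. (\<forall>i\<ge>n. y i = 0) \<and> (\<Sum>i<n. (y i)^2) = 1 \<longrightarrow> g x0 \<le> g y)"
proof -
  define S where "S = {y::nat\<Rightarrow>real. (\<forall>i\<ge>n. y i = 0) \<and> (\<Sum>i<n. (y i)^2) = 1}"
  define K where "K = Pi\<^sub>E UNIV (\<lambda>i::nat. if i < n then {-1..1::real} else {0})"
  have sub: "S \<subseteq> K"
  proof
    fix y assume y: "y \<in> S"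
    have "\<bar>y i\<bar> \<le> 1" if "i < n" for i
    proof -
      have "(y i)^2 \<le> (\<Sum>j<n. (y j)^2)"
        using that by (intro member_le_sum) auto
      then have "(y i)^2 \<le> 1^2" using y by (simp add: S_def)
      then show ?thesis using abs_le_square_iff by (metis abs_one)
    qed
    then show "y \<in> K" using y by (auto simp: K_def S_def PiE_iff abs_le_iff)
  qed
  have cl: "closed S"
  proof -
    have c1: "closed {y::nat\<Rightarrow>real. y i = 0}" for i
      by (rule closed_Collect_eq[OF continuous_on_product_coordinates continuous_on_const])
    have c2: "closed {y::nat\<Rightarrow>real. (\<Sum>i<n. (y i)^2) = 1}"
      by (rule closed_Collect_eq[OF continuous_on_sum[OF continuous_on_power[OF continuous_on_product_coordinates]] continuous_on_const])
    have "S = (\<Inter>i\<in>{n..}. {y. y i = 0}) \<inter> {y::nat\<Rightarrow>real. (\<Sum>i<n. (y i)^2) = 1}"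
      by (auto simp: S_def)
    then show ?thesis using c1 c2 by (auto intro!: closed_INT closed_Int)
  qed
  have cS: "compact S"
    using compact_Int_closed[OF compact_cube[of n] cl] sub by (simp add: K_def Int_absorb1 inf.absorb2)
  have ne: "S \<noteq> {}"
  proof -
    have "(\<Sum>i<n. ((\<lambda>i. if i = 0 then 1 else 0::real) i)^2) = (\<Sum>i<n. if i = 0 then 1 else 0)"
      by (rule sum.cong) auto
    also have "\<dots> = 1" using n by (simp add: sum.delta)
    finally have "(\<lambda>i. if i = 0 then 1 else 0::real) \<in> S" using n
      by (auto simp: S_def)
    then show ?thesis by auto
  qed
  obtain x0 where "x0 \<in> S" "\<forall>y\<in>S. g x0 \<le> g y"
    using continuous_attains_inf[OF cS ne continuous_on_subset[OF g]] by auto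
  then show ?thesis by (auto simp: S_def)
qed

lemma expand:
  assumes G: "simple_graph_on n E"
  shows "qf n E (\<lambda>i. x i + t * y i) / 2 - m * nrm n (\<lambda>i. x i + t * y i)
    = (qf n E x / 2 - m * nrm n x) + 2 * t * (\<Sum>i<n. y i * (Qf n E x i - m * x i))
      + t^2 * (qf n E y / 2 - m * nrm n y)"
proof -
  have a: "qf n E (\<lambda>i. x i + t * y i) / 2 = (\<Sum>i<n. (x i + t * y i) * (Qf n E x i + t * Qf n E y i))"
    using form_eq[OF G, of "\<lambda>i. x i + t * y i"] by (simp add: Qf_lin)
  have b: "(\<Sum>i<n. (x i + t * y i) * (Qf n E x i + t * Qf n E y i)) =
     (\<Sum>i<n. x i * Qf n E x i) + t * (\<Sum>i<n. x i * Qf n E y i) + t * (\<Sum>i<n. y i * Qf n E x i)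
     + t^2 * (\<Sum>i<n. y i * Qf n E y i)"
    by (simp add: sum.distrib sum_distrib_left algebra_simps power2_eq_square)
  have c: "nrm n (\<lambda>i. x i + t * y i) = nrm n x + 2 * t * (\<Sum>i<n. y i * x i) + t^2 * nrm n y"
    unfolding nrm_def by (simp add: sum.distrib sum_distrib_left algebra_simps power2_eq_square)
  have d: "(\<Sum>i<n. y i * (Qf n E x i - m * x i)) = (\<Sum>i<n. y i * Qf n E x i) - m * (\<Sum>i<n. y i * x i)"
    by (simp add: sum_subtractf sum_distrib_left algebra_simps)
  show ?thesis
    unfolding a b c d form_eq[OF G, symmetric] Qf_sym[OF G, of x y]
    by (simp add: algebra_simps)
qed

lemma core:
  assumes n: "n \<ge> 1" and G: "simple_graph_on n E"
  obtains m where "eigenvalue (signless_laplacian n E) m"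
    "\<And>a. eigenvalue (signless_laplacian n E) a \<Longrightarrow> m \<le> a"
    "\<And>x. m * nrm n x \<le> qf n E x / 2"
proof -
  obtain x0 where x0: "\<forall>i\<ge>n. x0 i = 0" "(\<Sum>i<n. (x0 i)^2) = 1"
    and mn: "\<And>y. (\<forall>i\<ge>n. y i = 0) \<and> (\<Sum>i<n. (y i)^2) = 1 \<Longrightarrow> qf n E x0 / 2 \<le> qf n E y / 2"
    using sphere_min[OF n qf_cont[of n E]] by blast
  define m where "m = qf n E x0 / 2"
  have P: "m * nrm n y \<le> qf n E y / 2" for y
  proof (cases "nrm n y = 0")
    case True then show ?thesis using qf_nonneg[of n E y] by simp
  next
    case False
    then have pos: "nrm n y > 0" using nrm_nonneg[of n y] by simp
    define c where "c = 1 / sqrt (nrm n y)"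
    define z where "z = (\<lambda>i. c * (if i < n then y i else 0))"
    have yy: "nrm n (\<lambda>i. if i < n then y i else 0) = nrm n y" "qf n E (\<lambda>i. if i < n then y i else 0) = qf n E y"
      by (auto intro: nrm_cong qf_cong)
    have c2: "c^2 = 1 / nrm n y" using pos by (simp add: c_def power_divide)
    have "nrm n z = 1" using pos unfolding z_def nrm_scale yy c2 by simp
    then have "qf n E x0 / 2 \<le> qf n E z / 2" by (intro mn) (auto simp: z_def nrm_def)
    then have "m \<le> qf n E y / 2 / nrm n y" unfolding m_def z_def qf_scale yy c2 by simp
    then show ?thesis using pos by (simp add: field_simps)
  qed
  have nx0: "nrm n x0 = 1" using x0 by (simp add: nrm_def)
  have eig: "Qf n E x0 k = m * x0 k" if k: "k < n" for k
  proof -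
    define e where "e = (\<lambda>i::nat. if i = k then 1 else 0::real)"
    have "(\<Sum>i<n. e i * (Qf n E x0 i - m * x0 i)) = (\<Sum>i<n. if i = k then Qf n E x0 i - m * x0 i else 0)"
      by (intro sum.cong) (auto simp: e_def)
    then have sd: "(\<Sum>i<n. e i * (Qf n E x0 i - m * x0 i)) = Qf n E x0 k - m * x0 k"
      using k by (simp add: sum.delta)
    have "\<forall>t. 0 \<le> 2 * t * (Qf n E x0 k - m * x0 k) + t^2 * (qf n E e / 2 - m * nrm n e)"
    proof
      fix t
      have "0 \<le> qf n E (\<lambda>i. x0 i + t * e i) / 2 - m * nrm n (\<lambda>i. x0 i + t * e i)" using P by simp
      also have "\<dots> = 2 * t * (Qf n E x0 k - m * x0 k) + t^2 * (qf n E e / 2 - m * nrm n e)"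
        unfolding expand[OF G] using nx0 k sd by (simp add: m_def)
      finally show "0 \<le> 2 * t * (Qf n E x0 k - m * x0 k) + t^2 * (qf n E e / 2 - m * nrm n e)" .
    qed
    then show ?thesis using quad_zero by fastforce
  qed
  let ?Q = "signless_laplacian n E"
  define v where "v = Matrix.vec n x0"
  have vc: "v \<in> carrier_vec n" by (simp add: v_def)
  have Qc: "?Q \<in> carrier_mat n n" by (simp add: signless_laplacian_def)
  have "v \<noteq> 0\<^sub>v n"
  proof
    assume "v = 0\<^sub>v n"
    then have "\<forall>i<n. x0 i = 0" by (metis v_def index_vec index_zero_vec(1))
    then show False using nx0 by (simp add: nrm_def)
  qed
  moreover have "?Q *\<^sub>v v = m \<cdot>\<^sub>v v"
  proof (rule eq_vecI)
    fix i assume i: "i < dim_vec (m \<cdot>\<^sub>v v)"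
    then have i': "i < n" by (simp add: v_def)
    have "(?Q *\<^sub>v v) $ i = Qf n E (\<lambda>j. v $ j) i" by (rule mv_eq[OF vc i'])
    also have "\<dots> = Qf n E x0 i" by (rule Qf_cong[OF _ i']) (simp add: v_def)
    finally show "(?Q *\<^sub>v v) $ i = (m \<cdot>\<^sub>v v) $ i" using eig[OF i'] i' by (simp add: v_def)
  qed (use Qc in \<open>simp add: v_def\<close>)
  ultimately have ev: "eigenvalue ?Q m" unfolding eigenvalue_def eigenvector_def using vc Qc by auto
  have lb: "m \<le> a" if a: "eigenvalue ?Q a" for a
  proof -
    obtain w where w: "w \<in> carrier_vec n" "w \<noteq> 0\<^sub>v n" "?Q *\<^sub>v w = a \<cdot>\<^sub>v w"
      using a Qc unfolding eigenvalue_def eigenvector_def by auto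
    define x where "x = (\<lambda>j. w $ j)"
    have "(\<Sum>i<n. x i * Qf n E x i) = (\<Sum>i<n. x i * (a * x i))"
    proof (rule sum.cong[OF refl])
      fix i assume "i \<in> {..<n}"
      then have i: "i < n" by simp
      have "Qf n E x i = (?Q *\<^sub>v w) $ i" using mv_eq[OF w(1) i] by (simp add: x_def)
      also have "\<dots> = a * x i" using w i by (simp add: x_def)
      finally show "x i * Qf n E x i = x i * (a * x i)" by simp
    qed
    then have eq: "qf n E x / 2 = a * nrm n x"
      unfolding form_eq[OF G, symmetric] nrm_def by (simp add: sum_distrib_left power2_eq_square algebra_simps)
    have "nrm n x > 0"
    proof -
      obtain i where i: "i < n" "w $ i \<noteq> 0"
        using w(1,2) by (metis eq_vecI carrier_vecD index_zero_vec)
      have "(x i)^2 \<le> nrm n x" unfolding nrm_def using i by (intro member_le_sum) auto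
      moreover have "(x i)^2 > 0" using i by (simp add: x_def)
      ultimately show ?thesis by linarith
    qed
    then show ?thesis using P[of x] eq by (simp add: mult_le_cancel_right)
  qed
  show ?thesis by (rule that[OF ev lb P])
qed

lemma eig_form:
  assumes G: "simple_graph_on n E" and a: "eigenvalue (signless_laplacian n E) a"
  shows "\<exists>x. nrm n x > 0 \<and> qf n E x / 2 = a * nrm n x"
proof -
  let ?Q = "signless_laplacian n E"
  have Qc: "?Q \<in> carrier_mat n n" by (simp add: signless_laplacian_def)
  obtain w where w: "w \<in> carrier_vec n" "w \<noteq> 0\<^sub>v n" "?Q *\<^sub>v w = a \<cdot>\<^sub>v w"
    using a Qc unfolding eigenvalue_def eigenvector_def by auto
  define x where "x = (\<lambda>j. w $ j)"
  have "(\<Sum>i<n. x i * Qf n E x i) = (\<Sum>i<n. x i * (a * x i))"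
  proof (rule sum.cong[OF refl])
    fix i assume "i \<in> {..<n}"
    then have i: "i < n" by simp
    have "Qf n E x i = (?Q *\<^sub>v w) $ i" using mv_eq[OF w(1) i] by (simp add: x_def)
    also have "\<dots> = a * x i" using w i by (simp add: x_def)
    finally show "x i * Qf n E x i = x i * (a * x i)" by simp
  qed
  then have eq: "qf n E x / 2 = a * nrm n x"
    unfolding form_eq[OF G, symmetric] nrm_def by (simp add: sum_distrib_left power2_eq_square algebra_simps)
  have "nrm n x > 0"
  proof -
    obtain i where i: "i < n" "w $ i \<noteq> 0"
      using w(1,2) by (metis eq_vecI carrier_vecD index_zero_vec)
    have "(x i)^2 \<le> nrm n x" unfolding nrm_def using i by (intro member_le_sum) auto
    moreover have "(x i)^2 > 0" using i by (simp add: x_def)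
    ultimately show ?thesis by linarith
  qed
  then show ?thesis using eq by blast
qed

lemma qmin_props:
  assumes n: "n \<ge> 1" and G: "simple_graph_on n E"
  shows "eigenvalue (signless_laplacian n E) (q_min n E)"
    "\<And>x. q_min n E * nrm n x \<le> qf n E x / 2"
    "\<And>a. eigenvalue (signless_laplacian n E) a \<Longrightarrow> q_min n E \<le> a"
proof -
  let ?Q = "signless_laplacian n E"
  have Qc: "?Q \<in> carrier_mat n n" by (simp add: signless_laplacian_def)
  obtain m where m: "eigenvalue ?Q m" "\<And>a. eigenvalue ?Q a \<Longrightarrow> m \<le> a" "\<And>x. m * nrm n x \<le> qf n E x / 2"
    using core[OF n G] by blast
  have cp: "char_poly ?Q \<noteq> 0" using degree_monic_char_poly[OF Qc] by auto
  have fin: "finite {a. eigenvalue ?Q a}"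
    using poly_roots_finite[OF cp] by (simp add: eigenvalue_root_char_poly[OF Qc])
  have "q_min n E = m" unfolding q_min_def using fin m(1,2) by (intro Min_eqI) auto
  then show "eigenvalue ?Q (q_min n E)" "\<And>x. q_min n E * nrm n x \<le> qf n E x / 2"
    "\<And>a. eigenvalue ?Q a \<Longrightarrow> q_min n E \<le> a" using m by auto
qed

lemma qmin_ge:
  assumes n: "n \<ge> 1" and G: "simple_graph_on n E"
    and c: "\<And>x. c * nrm n x \<le> qf n E x / 2"
  shows "c \<le> q_min n E"
proof -
  obtain x where x: "nrm n x > 0" "qf n E x / 2 = q_min n E * nrm n x"
    using eig_form[OF G qmin_props(1)[OF n G]] by blast
  show ?thesis using c[of x] x by (simp add: mult_le_cancel_right)
qed

lemma qmin_deg: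
  assumes n: "n \<ge> 1" and G: "simple_graph_on n E" and k: "k < n"
  shows "q_min n E \<le> real (degree n E k)"
proof -
  define e where "e = (\<lambda>i::nat. if i = k then 1 else 0::real)"
  have irr: "\<not> E k k" using G unfolding simple_graph_on_def by blast
  have "nrm n e = (\<Sum>i<n. if i = k then 1 else 0)" unfolding nrm_def e_def by (intro sum.cong) auto
  then have ne: "nrm n e = 1" using k by (simp add: sum.delta)
  have "(\<Sum>i<n. e i * Qf n E e i) = (\<Sum>i<n. if i = k then Qf n E e i else 0)"
    by (intro sum.cong) (auto simp: e_def)
  also have "\<dots> = Qf n E e k" using k by (simp add: sum.delta)
  also have "\<dots> = real (degree n E k)"
  proof -
    have "(\<Sum>j<n. if E k j then e j else 0) = 0" using irr by (intro sum.neutral) (auto simp: e_def)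
    then show ?thesis unfolding Qf_def by (simp add: e_def)
  qed
  finally have "qf n E e / 2 = real (degree n E k)" using form_eq[OF G] by simp
  then show ?thesis using qmin_props(2)[OF n G, of e] ne by simp
qed

lemma degree_le: "degree n E k \<le> n"
proof -
  have "degree n E k \<le> card {..<n}" unfolding degree_def by (intro card_mono) auto
  then show ?thesis by simp
qed

lemma qmin_le_n:
  assumes n: "n \<ge> 1" and G: "simple_graph_on n E"
  shows "q_min n E \<le> real n"
  using qmin_deg[OF n G, of 0] degree_le[of n E 0] n by simp

definition blow :: "nat \<Rightarrow> (nat \<Rightarrow> nat \<Rightarrow> bool) \<Rightarrow> nat \<Rightarrow> nat \<Rightarrow> nat \<Rightarrow> bool" where
  "blow m E N i j = (i < N \<and> j < N \<and> E (i mod m) (j mod m))"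

lemma blow_simple:
  assumes G: "simple_graph_on m E"
  shows "simple_graph_on N (blow m E N)"
proof -
  have sym: "E a b \<Longrightarrow> E b a" for a b using G unfolding simple_graph_on_def by blast
  have irr: "\<not> E a a" for a using G unfolding simple_graph_on_def by blast
  show ?thesis unfolding simple_graph_on_def blow_def using sym irr by simp
qed

lemma blow_free:
  assumes G: "simple_graph_on m E" and m: "m \<ge> 1" and nc: "\<not> contains_clique m E k"
  shows "\<not> contains_clique N (blow m E N) k"
proof
  assume "contains_clique N (blow m E N) k"
  then obtain S where S: "S \<subseteq> {..<N}" "card S = k" "\<forall>i\<in>S. \<forall>j\<in>S. i \<noteq> j \<longrightarrow> blow m E N i j"
    unfolding contains_clique_def by blast
  have irr: "\<not> E a a" for a using G unfolding simple_graph_on_def by blast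
  have inj: "inj_on (\<lambda>i. i mod m) S"
  proof (rule inj_onI)
    fix i j assume "i \<in> S" "j \<in> S" "i mod m = j mod m"
    then show "i = j"
    proof (cases "i = j")
      case False
      then have "blow m E N i j" using S(3) \<open>i \<in> S\<close> \<open>j \<in> S\<close> by blast
      then have "E (i mod m) (j mod m)" by (simp add: blow_def)
      then show ?thesis using irr \<open>i mod m = j mod m\<close> by simp
    qed simp
  qed
  have "(\<lambda>i. i mod m) ` S \<subseteq> {..<m}" using m by auto
  moreover have "card ((\<lambda>i. i mod m) ` S) = k" using card_image[OF inj] S(2) by simp
  moreover have "\<forall>a\<in>(\<lambda>i. i mod m) ` S. \<forall>b\<in>(\<lambda>i. i mod m) ` S. a \<noteq> b \<longrightarrow> E a b"
  proof (intro ballI impI)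
    fix a b assume a: "a \<in> (\<lambda>i. i mod m) ` S" and b: "b \<in> (\<lambda>i. i mod m) ` S" and ab: "a \<noteq> b"
    obtain i where i: "i \<in> S" "a = i mod m" using a by blast
    obtain j where j: "j \<in> S" "b = j mod m" using b by blast
    have "i \<noteq> j" using i j ab by blast
    then have "blow m E N i j" using S(3) i(1) j(1) by blast
    then show "E a b" using i j by (simp add: blow_def)
  qed
  ultimately have "contains_clique m E k" unfolding contains_clique_def by blast
  then show False using nc by simp
qed

lemma reindex:
  fixes f :: "nat \<Rightarrow> 'a::comm_monoid_add"
  shows "(\<Sum>i<T*m. f i) = (\<Sum>c<m. \<Sum>k<T. f (c + m*k))"
proof -
  have bij: "bij_betw (\<lambda>(c,k). c + m*k) ({..<m} \<times> {..<T}) {..<T*m}"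
  proof (rule bij_betwI[where g="\<lambda>i. (i mod m, i div m)"])
    show "(\<lambda>(c,k). c + m*k) \<in> {..<m} \<times> {..<T} \<rightarrow> {..<T*m}"
    proof
      fix p assume "p \<in> {..<m} \<times> {..<T}"
      then obtain c k where p: "p = (c,k)" "c < m" "k < T" by auto
      have "c + m*k < m + m*k" using p by simp
      also have "\<dots> = m * (k+1)" by simp
      also have "\<dots> \<le> m * T" using p by (intro mult_le_mono2) simp
      finally show "(\<lambda>(c,k). c + m*k) p \<in> {..<T*m}" using p by (simp add: mult.commute)
    qed
    show "(\<lambda>i. (i mod m, i div m)) \<in> {..<T*m} \<rightarrow> {..<m} \<times> {..<T}"
    proof
      fix i assume "i \<in> {..<T*m}"
      then have i: "i < T*m" by simp
      then have "m > 0" by (cases m) auto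
      moreover have "i div m < T" using i by (simp add: div_less_iff_less_mult mult.commute \<open>m > 0\<close>)
      ultimately show "(i mod m, i div m) \<in> {..<m} \<times> {..<T}" by simp
    qed
    show "(\<lambda>i. (i mod m, i div m)) ((\<lambda>(c,k). c + m*k) p) = p" if "p \<in> {..<m} \<times> {..<T}" for p
      using that by auto
    show "(\<lambda>(c,k). c + m*k) ((\<lambda>i. (i mod m, i div m)) i) = i" for i
      by simp
  qed
  have "(\<Sum>i<T*m. f i) = (\<Sum>p\<in>{..<m} \<times> {..<T}. f ((\<lambda>(c,k). c + m*k) p))"
    using sum.reindex_bij_betw[OF bij, of f] by simp
  also have "\<dots> = (\<Sum>c<m. \<Sum>k<T. f (c + m*k))"
    by (simp add: sum.cartesian_product split_def)
  finally show ?thesis .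
qed

lemma sq_sum_expand:
  fixes a b :: "nat \<Rightarrow> real"
  shows "(\<Sum>k<T. \<Sum>l<T. (a k + b l)^2) =
    (sum a {..<T} + sum b {..<T})^2 + (T * (\<Sum>k<T. (a k)^2) - (sum a {..<T})^2) + (T * (\<Sum>k<T. (b k)^2) - (sum b {..<T})^2)"
proof -
  have "(\<Sum>k<T. \<Sum>l<T. (a k + b l)^2) = (\<Sum>k<T. \<Sum>l<T. (a k)^2 + (b l)^2 + 2 * a k * b l)"
    by (simp add: power2_sum)
  also have "\<dots> = T * (\<Sum>k<T. (a k)^2) + T * (\<Sum>k<T. (b k)^2) + 2 * sum a {..<T} * sum b {..<T}"
    by (simp add: sum.distrib sum_distrib_left sum_distrib_right algebra_simps)
  finally show ?thesis by (simp add: power2_sum algebra_simps)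
qed

lemma full_blow:
  assumes m: "m \<ge> 1" and G: "simple_graph_on m E"
  shows "2 * real T * q_min m E * nrm (T*m) y \<le> qf (T*m) (blow m E (T*m)) y"
proof -
  define q where "q = q_min m E"
  define a where "a = (\<lambda>c k. y (c + m*k))"
  define A where "A = (\<lambda>c. \<Sum>k<T. a c k)"
  define Sa where "Sa = (\<lambda>c. \<Sum>k<T. (a c k)^2)"
  define W where "W = (\<lambda>c. real T * Sa c - (A c)^2)"
  have sym: "E i j = E j i" for i j using G unfolding simple_graph_on_def by blast
  have inr: "c + m*k < T*m" if "c < m" "k < T" for c k
  proof -
    have "c + m*k < m + m*k" using that by simp
    also have "\<dots> = m * (k+1)" by simp
    also have "\<dots> \<le> m * T" using that by (intro mult_le_mono2) simp
    finally show ?thesis by (simp add: mult.commute)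
  qed
  have bl: "blow m E (T*m) (c + m*k) (d + m*l) = E c d" if "c < m" "k < T" "d < m" "l < T" for c k d l
    using that inr[of c k] inr[of d l] unfolding blow_def by simp
  have "qf (T*m) (blow m E (T*m)) y =
      (\<Sum>c<m. \<Sum>k<T. \<Sum>d<m. \<Sum>l<T. if E c d then (a c k + a d l)^2 else 0)"
    unfolding qf_def reindex[of _ T m]
    by (intro sum.cong refl) (simp add: bl a_def)
  also have "\<dots> = (\<Sum>c<m. \<Sum>d<m. \<Sum>k<T. \<Sum>l<T. if E c d then (a c k + a d l)^2 else 0)"
    by (rule sum.cong[OF refl], rule sum.swap)
  also have "\<dots> = (\<Sum>c<m. \<Sum>d<m. if E c d then (A c + A d)^2 + W c + W d else 0)"
    by (intro sum.cong refl) (simp add: A_def W_def Sa_def sq_sum_expand)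
  also have "\<dots> = qf m E A + (\<Sum>c<m. \<Sum>d<m. if E c d then W c + W d else 0)"
    unfolding qf_def by (simp add: sum.distrib[symmetric]) (intro sum.cong refl, simp)
  also have "(\<Sum>c<m. \<Sum>d<m. if E c d then W c + W d else 0) = 2 * (\<Sum>c<m. real (degree m E c) * W c)"
  proof -
    have sw: "(\<Sum>c<m. \<Sum>d<m. if E c d then W d else 0) = (\<Sum>c<m. \<Sum>d<m. if E c d then W c else 0)"
      by (subst sum.swap) (intro sum.cong refl, auto simp: sym)
    have "(\<Sum>c<m. \<Sum>d<m. if E c d then W c + W d else 0) =
       (\<Sum>c<m. \<Sum>d<m. if E c d then W c else 0) + (\<Sum>c<m. \<Sum>d<m. if E c d then W d else 0)"
      by (simp add: sum.distrib[symmetric]) (intro sum.cong refl, simp)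
    also have "\<dots> = 2 * (\<Sum>c<m. \<Sum>d<m. if E c d then W c else 0)" using sw by simp
    also have "(\<Sum>c<m. \<Sum>d<m. if E c d then W c else 0) = (\<Sum>c<m. real (degree m E c) * W c)"
      by (intro sum.cong refl) (simp add: degree_sum sum_distrib_right, intro sum.cong refl, simp)
    finally show ?thesis .
  qed
  finally have eq: "qf (T*m) (blow m E (T*m)) y = qf m E A + 2 * (\<Sum>c<m. real (degree m E c) * W c)" .
  have Wnn: "W c \<ge> 0" for c
    using sum_squared_le_sum_of_squares[of "a c" "{..<T}"] by (simp add: W_def A_def Sa_def mult.commute)
  have "q * (\<Sum>c<m. W c) \<le> (\<Sum>c<m. real (degree m E c) * W c)"
    unfolding sum_distrib_left
    by (intro sum_mono mult_right_mono Wnn) (use qmin_deg[OF m G] in \<open>auto simp: q_def\<close>)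
  moreover have "q * nrm m A \<le> qf m E A / 2" using qmin_props(2)[OF m G] by (simp add: q_def)
  moreover have "nrm (T*m) y = (\<Sum>c<m. Sa c)"
    unfolding nrm_def reindex[of _ T m] by (simp add: Sa_def a_def)
  moreover have "nrm m A + (\<Sum>c<m. W c) = real T * (\<Sum>c<m. Sa c)"
    unfolding nrm_def W_def by (simp add: sum.distrib[symmetric] sum_distrib_left)
  ultimately have "2 * real T * q * nrm (T*m) y = 2 * q * (nrm m A + (\<Sum>c<m. W c))" by simp
  then show ?thesis unfolding eq q_def[symmetric]
    using \<open>q * (\<Sum>c<m. W c) \<le> (\<Sum>c<m. real (degree m E c) * W c)\<close> \<open>q * nrm m A \<le> qf m E A / 2\<close>
    by (simp add: algebra_simps)
qed

lemma sum_trunc: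
  fixes h :: "nat \<Rightarrow> real"
  assumes "N \<le> M"
  shows "(\<Sum>i<M. if i < N then h i else 0) = (\<Sum>i<N. h i)"
proof -
  have "(\<Sum>i<M. if i < N then h i else 0) = (\<Sum>i\<in>{i\<in>{..<M}. i < N}. h i)"
    by (rule sum.inter_filter[symmetric]) simp
  also have "{i\<in>{..<M}. i < N} = {..<N}" using assms by auto
  finally show ?thesis .
qed

lemma sum_tail:
  fixes c :: real
  shows "(\<Sum>j<M. if N \<le> j then c else 0) = real (M - N) * c"
proof -
  have "(\<Sum>j<M. if N \<le> j then c else 0) = (\<Sum>j\<in>{j\<in>{..<M}. N \<le> j}. c)"
    by (rule sum.inter_filter[symmetric]) simp
  also have "{j\<in>{..<M}. N \<le> j} = {N..<M}" by auto
  finally show ?thesis by simp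
qed

lemma trunc:
  assumes NM: "N \<le> M"
  shows "qf M (blow m E M) (\<lambda>i. if i < N then x i else 0) \<le> qf N (blow m E N) x + 2 * real (M - N) * nrm N x"
proof -
  define x' where "x' = (\<lambda>i. if i < N then x i else 0)"
  define g where "g = (\<lambda>i j. if blow m E N i j then (x i + x j)^2 else 0)"
  have bnd: "(if blow m E M i j then (x' i + x' j)^2 else 0) \<le>
      (if i < N then (if j < N then g i j else 0) else 0) + (if i < N then (if N \<le> j then (x i)^2 else 0) else 0)
      + (if j < N then (if N \<le> i then (x j)^2 else 0) else 0)" for i j
  proof (cases "i < N")
    case True
    then show ?thesis
    proof (cases "j < N")
      case True
      then show ?thesis using \<open>i < N\<close> NM by (simp add: x'_def g_def blow_def)
    next
      case False
      then show ?thesis using \<open>i < N\<close> by (simp add: x'_def)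
    qed
  next
    case False
    then show ?thesis
    proof (cases "j < N")
      case True
      then show ?thesis using \<open>\<not> i < N\<close> by (simp add: x'_def)
    next
      case False
      then show ?thesis using \<open>\<not> i < N\<close> by (simp add: x'_def)
    qed
  qed
  have s1: "(\<Sum>i<M. \<Sum>j<M. if i < N then (if j < N then g i j else 0) else 0) = qf N (blow m E N) x"
  proof -
    have "(\<Sum>i<M. \<Sum>j<M. if i < N then (if j < N then g i j else 0) else 0)
        = (\<Sum>i<M. if i < N then (\<Sum>j<M. if j < N then g i j else 0) else 0)"
      by (intro sum.cong refl) auto
    also have "\<dots> = (\<Sum>i<N. \<Sum>j<N. g i j)" using NM by (simp add: sum_trunc)
    finally show ?thesis by (simp add: qf_def g_def)
  qed
  have s2: "(\<Sum>i<M. \<Sum>j<M. if i < N then (if N \<le> j then (x i)^2 else 0) else 0) = real (M - N) * nrm N x"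
  proof -
    have "(\<Sum>i<M. \<Sum>j<M. if i < N then (if N \<le> j then (x i)^2 else 0) else 0)
        = (\<Sum>i<M. if i < N then (\<Sum>j<M. if N \<le> j then (x i)^2 else 0) else 0)"
      by (intro sum.cong refl) auto
    also have "\<dots> = (\<Sum>i<N. real (M - N) * (x i)^2)" using NM by (simp add: sum_trunc sum_tail)
    finally show ?thesis by (simp add: nrm_def sum_distrib_left)
  qed
  have s3: "(\<Sum>i<M. \<Sum>j<M. if j < N then (if N \<le> i then (x j)^2 else 0) else 0) = real (M - N) * nrm N x"
    using s2 by (subst sum.swap) simp
  have "qf M (blow m E M) x' \<le> (\<Sum>i<M. \<Sum>j<M.
      (if i < N then (if j < N then g i j else 0) else 0) + (if i < N then (if N \<le> j then (x i)^2 else 0) else 0)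
      + (if j < N then (if N \<le> i then (x j)^2 else 0) else 0))"
    unfolding qf_def by (intro sum_mono bnd)
  also have "\<dots> = qf N (blow m E N) x + 2 * real (M - N) * nrm N x"
    by (simp add: sum.distrib s1 s2 s3)
  finally show ?thesis by (simp add: x'_def)
qed

lemma blow_lower:
  assumes m: "m \<ge> 1" and G: "simple_graph_on m E" and N: "N \<ge> 1"
  shows "real (N div m + 1) * q_min m E - real m \<le> q_min N (blow m E N)"
proof (rule qmin_ge[OF N blow_simple[OF G]])
  fix x :: "nat \<Rightarrow> real"
  define T where "T = N div m + 1"
  define M where "M = T * m"
  have NM: "N \<le> M"
  proof -
    have "N mod m < m" using m by simp
    moreover have "N div m * m + N mod m = N" by simp
    moreover have "M = N div m * m + m" by (simp add: M_def T_def)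
    ultimately show ?thesis by linarith
  qed
  have MN: "M - N \<le> m"
  proof -
    have "M = (N div m) * m + m" by (simp add: M_def T_def)
    moreover have "(N div m) * m \<le> N" by (simp add: div_times_less_eq_dividend)
    ultimately show ?thesis by linarith
  qed
  define x' where "x' = (\<lambda>i. if i < N then x i else 0)"
  have "nrm M x' = (\<Sum>i<M. if i < N then (x i)^2 else 0)"
    unfolding nrm_def by (intro sum.cong) (auto simp: x'_def)
  then have nx: "nrm M x' = nrm N x" using NM by (simp add: sum_trunc nrm_def)
  have "2 * real T * q_min m E * nrm M x' \<le> qf M (blow m E M) x'"
    unfolding M_def by (rule full_blow[OF m G])
  also have "\<dots> \<le> qf N (blow m E N) x + 2 * real (M - N) * nrm N x"
    unfolding x'_def by (rule trunc[OF NM])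
  finally have h: "2 * real T * q_min m E * nrm N x \<le> qf N (blow m E N) x + 2 * real (M - N) * nrm N x"
    by (simp add: nx)
  have "real (M - N) * nrm N x \<le> real m * nrm N x"
    using MN nrm_nonneg[of N x] by (intro mult_right_mono) auto
  then show "(real (N div m + 1) * q_min m E - real m) * nrm N x \<le> qf N (blow m E N) x / 2"
    using h unfolding T_def by (simp add: algebra_simps)
qed

lemma qmin_nonneg:
  assumes n: "n \<ge> 1" and G: "simple_graph_on n E"
  shows "0 \<le> q_min n E"
proof -
  obtain x where x: "nrm n x > 0" "qf n E x / 2 = q_min n E * nrm n x"
    using eig_form[OF G qmin_props(1)[OF n G]] by blast
  then show ?thesis using qf_nonneg[of n E x] by (simp add: zero_le_mult_iff)
qed

lemma fin_graphs:
  "finite {q_min n E | E. simple_graph_on n E \<and> P E}"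
proof -
  have "{q_min n E | E. simple_graph_on n E \<and> P E} \<subseteq>
      (\<lambda>S. q_min n (\<lambda>i j. (i,j) \<in> S)) ` Pow ({..<n} \<times> {..<n})"
  proof
    fix a assume "a \<in> {q_min n E | E. simple_graph_on n E \<and> P E}"
    then obtain E where E: "a = q_min n E" "simple_graph_on n E" by blast
    define S where "S = {(i,j). i < n \<and> j < n \<and> E i j}"
    have "E = (\<lambda>i j. (i,j) \<in> S)" using E(2) unfolding S_def simple_graph_on_def by (auto intro!: ext)
    moreover have "S \<in> Pow ({..<n} \<times> {..<n})" by (auto simp: S_def)
    ultimately show "a \<in> (\<lambda>S. q_min n (\<lambda>i j. (i,j) \<in> S)) ` Pow ({..<n} \<times> {..<n})" using E(1) by blast
  qed
  then show ?thesis by (rule finite_subset) simp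
qed

lemma empty_ok:
  assumes "r \<ge> 2"
  shows "simple_graph_on n (\<lambda>_ _. False) \<and> \<not> contains_clique n (\<lambda>_ _. False) (r + 1)"
proof -
  have "\<not> contains_clique n (\<lambda>_ _. False) (r + 1)"
  proof
    assume "contains_clique n (\<lambda>_ _. False) (r + 1)"
    then obtain S :: "nat set" where S: "card S = r + 1" "\<forall>i\<in>S. \<forall>j\<in>S. i \<noteq> j \<longrightarrow> False"
      unfolding contains_clique_def by blast
    have fin: "finite S"
    proof (rule ccontr)
      assume "infinite S"
      then have "card S = 0" by simp
      then show False using S(1) by simp
    qed
    have "card S \<le> Suc 0" using card_le_Suc0_iff_eq[OF fin] S(2) by blast
    then show False using S(1) assms by simp
  qed
  then show ?thesis by (simp add: simple_graph_on_def)
qed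

theorem theorem2:
  fixes r :: nat
  assumes "r \<ge> 2"
  shows "(\<lambda>n. f_r r n / real n) \<longlonglongrightarrow> c_r r"
proof -
  define C where "C = {q_min n E / real n | n E. n \<ge> 1 \<and> simple_graph_on n E \<and> \<not> contains_clique n E (r + 1)}"
  have cr: "c_r r = Sup C" by (simp add: c_r_def C_def)
  have bdd: "bdd_above C"
  proof (rule bdd_aboveI)
    fix y assume "y \<in> C"
    then obtain n E where y: "y = q_min n E / real n" "n \<ge> 1" "simple_graph_on n E" by (auto simp: C_def)
    show "y \<le> 1" using qmin_le_n[OF y(2,3)] y(2) by (simp add: y(1) divide_le_eq)
  qed
  have Cne: "C \<noteq> {}" using empty_ok[OF assms, of 1] unfolding C_def by blast
  have fr: "f_r r n \<in> {q_min n E | E. simple_graph_on n E \<and> \<not> contains_clique n E (r + 1)}"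
    and frge: "\<And>E. simple_graph_on n E \<Longrightarrow> \<not> contains_clique n E (r + 1) \<Longrightarrow> q_min n E \<le> f_r r n" for n
  proof -
    let ?F = "{q_min n E | E. simple_graph_on n E \<and> \<not> contains_clique n E (r + 1)}"
    have fin: "finite ?F" by (rule fin_graphs)
    have ne: "?F \<noteq> {}" using empty_ok[OF assms, of n] by blast
    show "f_r r n \<in> ?F" unfolding f_r_def using Max_in[OF fin ne] .
    show "q_min n E \<le> f_r r n" if "simple_graph_on n E" "\<not> contains_clique n E (r + 1)" for E
      unfolding f_r_def using that by (intro Max_ge[OF fin]) blast
  qed
  have upper: "f_r r n / real n \<le> c_r r" if n: "n \<ge> 1" for n
  proof -
    obtain E where E: "f_r r n = q_min n E" "simple_graph_on n E" "\<not> contains_clique n E (r + 1)"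
      using fr[of n] by blast
    have "q_min n E / real n \<in> C" unfolding C_def using E(2,3) n by blast
    then have "f_r r n / real n \<in> C" using E(1) by simp
    then show ?thesis unfolding cr by (rule cSup_upper[OF _ bdd])
  qed
  show ?thesis
  proof (rule LIMSEQ_I)
    fix e :: real assume e: "e > 0"
    have "c_r r - e / 2 < Sup C" using e cr by simp
    then obtain y where "y \<in> C" "c_r r - e / 2 < y" using less_cSup_iff[OF Cne bdd] by blast
    then obtain m E where mE: "c_r r - e / 2 < q_min m E / real m" "m \<ge> 1" "simple_graph_on m E"
      "\<not> contains_clique m E (r + 1)" by (auto simp: C_def)
    define q where "q = q_min m E"
    have q0: "q \<ge> 0" unfolding q_def by (rule qmin_nonneg[OF mE(2,3)])
    obtain N0 :: nat where N0: "real m / (e / 2) < real N0" using reals_Archimedean2 by blast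
    define N where "N = max 1 N0"
    show "\<exists>N. \<forall>n\<ge>N. norm (f_r r n / real n - c_r r) < e"
    proof (intro exI allI impI)
      fix n assume nN: "n \<ge> N"
      then have n1: "n \<ge> 1" by (simp add: N_def)
      have nbig: "real m / (e / 2) < real n" using N0 nN by (simp add: N_def)
      then have mn: "real m / real n < e / 2" using e n1 by (simp add: field_simps)
      have "q_min n (blow m E n) \<le> f_r r n"
        by (rule frge) (rule blow_simple[OF mE(3)], rule blow_free[OF mE(3,2,4)])
      then have low1: "real (n div m + 1) * q - real m \<le> f_r r n"
        using blow_lower[OF mE(2,3) n1] unfolding q_def by linarith
      have "real n \<le> real (n div m + 1) * real m"
      proof -
        have "n mod m < m" using mE(2) by simp
        moreover have "n div m * m + n mod m = n" by simp
        moreover have "(n div m + 1) * m = n div m * m + m" by simp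
        ultimately have h: "n \<le> (n div m + 1) * m" by linarith
        have "real n \<le> real ((n div m + 1) * m)" using h by (simp only: of_nat_le_iff)
        then show ?thesis by (simp add: algebra_simps)
      qed
      then have "real n / real m * q \<le> real (n div m + 1) * q"
        using q0 mE(2) by (intro mult_right_mono) (auto simp: divide_le_eq)
      then have A: "real n / real m * q - real m \<le> f_r r n" using low1 by linarith
      have "(real n / real m * q - real m) / real n \<le> f_r r n / real n"
        using n1 by (intro divide_right_mono[OF A]) auto
      moreover have "(real n / real m * q - real m) / real n = q / real m - real m / real n"
        using n1 mE(2) by (simp add: field_simps)
      ultimately have "q / real m - real m / real n \<le> f_r r n / real n" by simp
      then have "c_r r - e < f_r r n / real n" using mn mE(1) unfolding q_def by linarith
      moreover have "f_r r n / real n \<le> c_r r" by (rule upper[OF n1])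
      ultimately show "norm (f_r r n / real n - c_r r) < e" by simp
    qed
  qed
qed

end
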